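(* Let $S$ be an instance of 3-Partition (with $n_1\ge\cdots\ge n_{3m}$) and let $w_S$ and $\mathrm{Ver}_S$ be as defined below. (i) For any sequence of non-negative integers $\langle i_k\rangle_{k=1}^{3m}$ such that $i_{3j-2}+i_{3j-1}+i_{3j}=B$ for every $j\in\{1,\dots,m\}$, there is a computation $\varepsilon\,\|\,w_S\vdash^*\prod_{k=1}^{3m}(a_1b^{i_k}a_2)\,\|\,\mathrm{Ver}_S$. (ii) Conversely, if $\varepsilon\,\|\,w_S\vdash^* W\,\|\,\mathrm{Ver}_S\vdash^*\varepsilon\,\|\,\varepsilon$ (i.e. the configuration $W\,\|\,\mathrm{Ver}_S$ is reached in an accepting computation of $w_S$), then $W=\prod_{k=1}^{3m}(a_1b^{i_k}a_2)$ for some non-negative integers $i_1,\dots,i_{3m}$ satisfying $i_{3j-2}+i_{3j-1}+i_{3j}=B$ for every $j\in\{1,\dots,m\}$.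
   Context: Queue automaton: a configuration is written $Q\,\|\,x$ ($Q$ = queue contents, $x$ = remaining input); a step from $Q\,\|\,\sigma x$ ($\sigma$ a symbol) goes either to $Q\sigma\,\|\,x$ (push) or, if $Q=\sigma Q'$, to $Q'\,\|\,x$ (match/pop). $\vdash^*$ is zero or more steps; $\varepsilon$ is the empty string; an accepting computation of $w$ is a computation $\varepsilon\,\|\,w\vdash^*\varepsilon\,\|\,\varepsilon$. An instance of 3-Partition is a sequence $S=\langle n_i:1\le i\le 3m\rangle$ of natural numbers such that $B=(\sum_{i=1}^{3m}n_i)/m$ is an integer and $B/4<n_i<B/2$ for all $i$; throughout, the $n_i$ are assumed to be in non-increasing order. The alphabet is $\{a_1,a_2,b,e_0,e,c_1,c_2,x,y\}$; $u^i$ denotes $i$ concatenated copies of $u$ and $\prod_{\ell=1}^k u_\ell=u_1u_2\cdots u_k$. Define $U_\ell=a_1^2b^\ell a_2^2$, $v_\ell=c_1x^\ell y^\ell c_2$, $D_k=U_{n_k}^{3m-k+1}$, $E_k=U_B^{3m-k}\,a_1b^{n_k}a_2\,U_B^{3m-k}$, $F_k=U_B^{2(3m-k)}$, and $\mathrm{Load}_S=e_0\prod_{i=1}^m(b^{2B}e)$, $\mathrm{Dist}_S=e_0\prod_{i=1}^m((a_1b^Ba_2)^3e)$, $\mathrm{Ver}_S=\prod_{k=1}^{3m}[v_{4k-3}D_kv_{4k-3}\,v_{4k-2}D_kv_{4k-2}\,v_{4k-1}E_kv_{4k-1}\,v_{4k}F_kv_{4k}]$, and $w_S=\mathrm{Load}_S\mathrm{Dist}_S\mathrm{Ver}_S$.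 *)

theory Defs
  imports Main
begin

datatype sym = a\<^sub>1 | a\<^sub>2 | b | e\<^sub>0 | e | c\<^sub>1 | c\<^sub>2 | x | y

text \<open>Configurations Q || x are pairs (queue contents, remaining input).\<close>
inductive qstep :: "sym list \<times> sym list \<Rightarrow> sym list \<times> sym list \<Rightarrow> bool" where
  push: "qstep (Q, \<sigma> # w) (Q @ [\<sigma>], w)"
| pop:  "qstep (\<sigma> # Q, \<sigma> # w) (Q, w)"

abbreviation qsteps :: "sym list \<times> sym list \<Rightarrow> sym list \<times> sym list \<Rightarrow> bool" where
  "qsteps \<equiv> qstep\<^sup>*\<^sup>*"

definition pw :: "sym list \<Rightarrow> nat \<Rightarrow> sym list" where
  "pw u i = concat (replicate i u)"

definition prodw :: "nat \<Rightarrow> (nat \<Rightarrow> sym list) \<Rightarrow> sym list" where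
  "prodw n f = concat (map f [1..<Suc n])"

text \<open>A 3-Partition instance: n_k = ns ! (k-1), k = 1..3m, non-increasing.\<close>
definition three_partition_instance :: "nat list \<Rightarrow> nat \<Rightarrow> nat \<Rightarrow> bool" where
  "three_partition_instance ns m B \<longleftrightarrow>
     m > 0 \<and> length ns = 3 * m \<and> sum_list ns = m * B \<and>
     (\<forall>i < 3 * m. B < 4 * ns ! i \<and> 2 * ns ! i < B) \<and>
     sorted_wrt (\<ge>) ns"

definition U :: "nat \<Rightarrow> sym list" where
  "U l = [a\<^sub>1, a\<^sub>1] @ replicate l b @ [a\<^sub>2, a\<^sub>2]"

definition vw :: "nat \<Rightarrow> sym list" where
  "vw l = [c\<^sub>1] @ replicate l x @ replicate l y @ [c\<^sub>2]"

definition Dw :: "nat list \<Rightarrow> nat \<Rightarrow> nat \<Rightarrow> sym list" where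
  "Dw ns m k = pw (U (ns ! (k - 1))) (3 * m - k + 1)"

definition Ew :: "nat list \<Rightarrow> nat \<Rightarrow> nat \<Rightarrow> nat \<Rightarrow> sym list" where
  "Ew ns m B k = pw (U B) (3 * m - k) @ [a\<^sub>1] @ replicate (ns ! (k - 1)) b @ [a\<^sub>2] @ pw (U B) (3 * m - k)"

definition Fw :: "nat \<Rightarrow> nat \<Rightarrow> nat \<Rightarrow> sym list" where
  "Fw m B k = pw (U B) (2 * (3 * m - k))"

definition Load :: "nat \<Rightarrow> nat \<Rightarrow> sym list" where
  "Load m B = e\<^sub>0 # prodw m (\<lambda>i. replicate (2 * B) b @ [e])"

definition Dist :: "nat \<Rightarrow> nat \<Rightarrow> sym list" where
  "Dist m B = e\<^sub>0 # prodw m (\<lambda>i. pw ([a\<^sub>1] @ replicate B b @ [a\<^sub>2]) 3 @ [e])"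

definition Ver :: "nat list \<Rightarrow> nat \<Rightarrow> nat \<Rightarrow> sym list" where
  "Ver ns m B = prodw (3 * m) (\<lambda>k.
      vw (4*k-3) @ Dw ns m k @ vw (4*k-3) @
      vw (4*k-2) @ Dw ns m k @ vw (4*k-2) @
      vw (4*k-1) @ Ew ns m B k @ vw (4*k-1) @
      vw (4*k) @ Fw m B k @ vw (4*k))"

definition wS :: "nat list \<Rightarrow> nat \<Rightarrow> nat \<Rightarrow> sym list" where
  "wS ns m B = Load m B @ Dist m B @ Ver ns m B"

end

theory Submission
  imports Defs
begin

definition blk :: "nat \<Rightarrow> sym list" where
  "blk c = a\<^sub>1 # replicate c b @ [a\<^sub>2]"

lemma push_all: "qsteps (Q, u @ v) (Q @ u, v)"
proof (induction u arbitrary: Q)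
  case Nil then show ?case by simp
next
  case (Cons s u)
  have "qstep (Q, s # u @ v) (Q @ [s], u @ v)" by (rule qstep.push)
  moreover have "qsteps (Q @ [s], u @ v) ((Q @ [s]) @ u, v)" by (rule Cons.IH)
  ultimately show ?case by (simp add: converse_rtranclp_into_rtranclp)
qed

lemma pop_all: "qsteps (u @ Q, u @ v) (Q, v)"
proof (induction u)
  case Nil then show ?case by simp
next
  case (Cons s u)
  have "qstep (s # u @ Q, s # u @ v) (u @ Q, u @ v)" by (rule qstep.pop)
  with Cons.IH show ?case by (simp add: converse_rtranclp_into_rtranclp)
qed

lemma qsteps_len: "qsteps c c' \<Longrightarrow> c = c' \<or> length (snd c') < length (snd c)"
proof (induction rule: rtranclp_induct)
  case base then show ?case by simp
next
  case (step c1 c2)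
  from step.hyps(2) have "length (snd c2) < length (snd c1)"
    by (cases rule: qstep.cases) auto
  with step.IH show ?case by auto
qed

lemma qsteps_set: "qsteps c c' \<Longrightarrow> set (fst c) \<subseteq> set (snd c) \<union> set (fst c')"
proof (induction rule: converse_rtranclp_induct)
  case base then show ?case by simp
next
  case (step c1 c2)
  from step.hyps(1) show ?case
    by (cases rule: qstep.cases) (use step.IH in auto)
qed

fun reach :: "sym list \<Rightarrow> sym list \<Rightarrow> sym list set" where
  "reach Q [] = {Q}"
| "reach Q (s # u) = reach (Q @ [s]) u \<union>
     (case Q of [] \<Rightarrow> {} | q # Q1 \<Rightarrow> if q = s then reach Q1 u else {})"

lemma qsteps_reach: "qsteps (Q, u @ v) (Q', v) \<Longrightarrow> Q' \<in> reach Q u"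
proof (induction u arbitrary: Q)
  case Nil
  from qsteps_len[OF Nil[simplified]] show ?case by simp
next
  case (Cons s u)
  from qsteps_len[OF Cons.prems] have ne: "(Q, (s # u) @ v) \<noteq> (Q', v)" by auto
  from Cons.prems ne obtain c1 where st: "qstep (Q, s # u @ v) c1" and r: "qsteps c1 (Q', v)"
    by (auto elim: converse_rtranclpE)
  from st show ?case
  proof (cases rule: qstep.cases)
    case push with r Cons.IH show ?thesis by auto
  next
    case (pop Q1) with r Cons.IH show ?thesis by auto
  qed
qed

lemma reach_append: "reach Q (u @ w) = (\<Union>Q1\<in>reach Q u. reach Q1 w)"
  by (induction u arbitrary: Q) (auto split: list.splits)

lemma reach_nopop: "s \<notin> set u \<Longrightarrow> reach (s # Q) u = {s # Q @ u}"
  by (induction u arbitrary: Q) auto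

definition cnt :: "sym list \<Rightarrow> nat" where "cnt xs = length (filter ((=) e) xs)"

lemma reach_count: "Q' \<in> reach Q u \<Longrightarrow> cnt Q \<le> cnt Q' + cnt u"
proof (induction u arbitrary: Q)
  case Nil then show ?case by simp
next
  case (Cons s u)
  show ?case
  proof (cases "Q' \<in> reach (Q @ [s]) u")
    case True
    from Cons.IH[OF True] show ?thesis by (simp add: cnt_def)
  next
    case False
    with Cons.prems obtain Q1 where "Q = s # Q1" "Q' \<in> reach Q1 u"
      by (auto split: list.splits if_splits)
    with Cons.IH show ?thesis by (fastforce simp: cnt_def)
  qed
qed

lemma reach_skip: "s \<noteq> b \<Longrightarrow> s \<noteq> e \<Longrightarrow>
   reach (replicate n b @ e # R) (s # u) = reach (replicate n b @ e # R @ [s]) u"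
  by (cases n) auto

lemma reach_bs: "Q' \<in> reach (replicate n b @ e # R) (replicate c b @ u) \<Longrightarrow>
  \<exists>p\<le>n. p \<le> c \<and> Q' \<in> reach (replicate (n-p) b @ e # R @ replicate (c-p) b) u"
proof (induction c arbitrary: n R)
  case 0 then show ?case by (intro exI[of _ 0]) simp
next
  case (Suc c)
  show ?case
  proof (cases "Q' \<in> reach (replicate n b @ e # R @ [b]) (replicate c b @ u)")
    case True
    from Suc.IH[of n "R @ [b]"] True obtain p where "p \<le> n" "p \<le> c"
      "Q' \<in> reach (replicate (n-p) b @ e # (R @ [b]) @ replicate (c-p) b) u" by auto
    moreover have "replicate (Suc c - p) b = b # replicate (c - p) b"
      using \<open>p \<le> c\<close> by (simp add: Suc_diff_le)
    ultimately show ?thesis by (intro exI[of _ p]) auto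
  next
    case False
    with Suc.prems obtain n' where n: "n = Suc n'" and
      "Q' \<in> reach (replicate n' b @ e # R) (replicate c b @ u)"
      by (cases n) auto
    with Suc.IH obtain p where "p \<le> n'" "p \<le> c"
      "Q' \<in> reach (replicate (n'-p) b @ e # R @ replicate (c-p) b) u" by blast
    then show ?thesis using n by (intro exI[of _ "Suc p"]) auto
  qed
qed

lemma reach_blk: "Q' \<in> reach (replicate n b @ e # R) (blk c @ u) \<Longrightarrow>
  \<exists>p\<le>n. p \<le> c \<and> Q' \<in> reach (replicate (n-p) b @ e # R @ blk (c-p)) u"
proof -
  assume "Q' \<in> reach (replicate n b @ e # R) (blk c @ u)"
  moreover have "blk c @ u = a\<^sub>1 # (replicate c b @ a\<^sub>2 # u)" by (simp add: blk_def)
  ultimately have "Q' \<in> reach (replicate n b @ e # R @ [a\<^sub>1]) (replicate c b @ a\<^sub>2 # u)"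
    by (metis reach_skip sym.distinct(3) sym.distinct(7))
  from reach_bs[OF this] obtain p where "p \<le> n" "p \<le> c" and
    "Q' \<in> reach (replicate (n-p) b @ e # (R @ [a\<^sub>1]) @ replicate (c-p) b) (a\<^sub>2 # u)" by auto
  moreover have "reach (replicate (n-p) b @ e # (R @ [a\<^sub>1]) @ replicate (c-p) b) (a\<^sub>2 # u)
     = reach (replicate (n-p) b @ e # R @ blk (c-p)) u"
    by (subst reach_skip) (auto simp: blk_def)
  ultimately show ?thesis by (intro exI[of _ p]) auto
qed


lemma cnt_simps[simp]: "cnt [] = 0" "cnt (s # xs) = (if s = e then Suc (cnt xs) else cnt xs)"
  "cnt (xs @ ys) = cnt xs + cnt ys" "cnt (replicate n b) = 0" "cnt (blk c) = 0"
  by (auto simp: cnt_def blk_def)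

lemma cnt_concat_rep: "cnt (concat (replicate n xs)) = n * cnt xs"
  by (induction n) auto

lemma seg2: "Q' \<in> reach (replicate (2*B) b @ e # R) (blk B @ blk B @ blk B @ e # u) \<Longrightarrow>
  (\<exists>i1 i2 i3. i1 + i2 + i3 = B \<and> Q' \<in> reach (R @ blk i1 @ blk i2 @ blk i3) u)
  \<or> (\<exists>Q2. cnt Q2 = cnt R + 2 \<and> Q' \<in> reach Q2 u)"
proof -
  assume h: "Q' \<in> reach (replicate (2*B) b @ e # R) (blk B @ blk B @ blk B @ e # u)"
  from reach_blk[OF h] obtain p1 where p1: "p1 \<le> 2*B" "p1 \<le> B" and
    h1: "Q' \<in> reach (replicate (2*B-p1) b @ e # R @ blk (B-p1)) (blk B @ blk B @ e # u)" by auto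
  from reach_blk[of Q' _ "R @ blk (B-p1)", OF h1[simplified]] obtain p2 where p2: "p2 \<le> 2*B-p1" "p2 \<le> B" and
    h2: "Q' \<in> reach (replicate (2*B-p1-p2) b @ e # R @ blk (B-p1) @ blk (B-p2)) (blk B @ e # u)" by auto
  from reach_blk[of Q' _ "R @ blk (B-p1) @ blk (B-p2)", OF h2[simplified]] obtain p3 where p3: "p3 \<le> 2*B-p1-p2" "p3 \<le> B" and
    h3: "Q' \<in> reach (replicate (2*B-p1-p2-p3) b @ e # R @ blk (B-p1) @ blk (B-p2) @ blk (B-p3)) (e # u)" by auto
  let ?X = "R @ blk (B-p1) @ blk (B-p2) @ blk (B-p3)"
  show ?thesis
  proof (cases "2*B-p1-p2-p3")
    case 0
    with h3 have "Q' \<in> reach (e # ?X @ [e]) u \<or> Q' \<in> reach ?X u" by auto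
    then show ?thesis
    proof
      assume "Q' \<in> reach (e # ?X @ [e]) u"
      then show ?thesis by (intro disjI2 exI[of _ "e # ?X @ [e]"]) auto
    next
      assume "Q' \<in> reach ?X u"
      moreover have "(B-p1) + (B-p2) + (B-p3) = B" using p1 p2 p3 0 by arith
      ultimately show ?thesis by blast
    qed
  next
    case (Suc r)
    with h3 have "Q' \<in> reach (replicate (Suc r) b @ e # ?X @ [e]) u" by auto
    then show ?thesis by (intro disjI2 exI[of _ "replicate (Suc r) b @ e # ?X @ [e]"]) auto
  qed
qed

lemma main2: "W \<in> reach (concat (replicate n (replicate (2*B) b @ [e])) @ P)
       (concat (replicate n (blk B @ blk B @ blk B @ [e]))) \<Longrightarrow> e \<notin> set W \<Longrightarrow>
  \<exists>ks. length ks = 3*n \<and> (\<forall>j<n. ks!(3*j) + ks!(3*j+1) + ks!(3*j+2) = B) \<and>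
     W = P @ concat (map blk ks)"
proof (induction n arbitrary: P)
  case 0 then show ?case by (intro exI[of _ "[]"]) simp
next
  case (Suc n)
  let ?R = "concat (replicate n (replicate (2*B) b @ [e])) @ P"
  let ?u = "concat (replicate n (blk B @ blk B @ blk B @ [e]))"
  from Suc.prems(1) have "W \<in> reach (replicate (2*B) b @ e # ?R) (blk B @ blk B @ blk B @ e # ?u)"
    by simp
  from seg2[OF this] show ?case
  proof
    assume "\<exists>i1 i2 i3. i1 + i2 + i3 = B \<and> W \<in> reach (?R @ blk i1 @ blk i2 @ blk i3) ?u"
    then obtain i1 i2 i3 where s: "i1 + i2 + i3 = B" and
      w: "W \<in> reach (?R @ blk i1 @ blk i2 @ blk i3) ?u" by blast
    from w have "W \<in> reach (concat (replicate n (replicate (2*B) b @ [e])) @ (P @ blk i1 @ blk i2 @ blk i3)) ?u"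
      by simp
    from Suc.IH[OF this Suc.prems(2)] obtain ks where
      l: "length ks = 3*n" and c: "\<forall>j<n. ks!(3*j) + ks!(3*j+1) + ks!(3*j+2) = B" and
      we: "W = (P @ blk i1 @ blk i2 @ blk i3) @ concat (map blk ks)" by blast
    have "\<forall>j<Suc n. (i1#i2#i3#ks)!(3*j) + (i1#i2#i3#ks)!(3*j+1) + (i1#i2#i3#ks)!(3*j+2) = B"
    proof (intro allI impI)
      fix j assume "j < Suc n"
      then show "(i1#i2#i3#ks)!(3*j) + (i1#i2#i3#ks)!(3*j+1) + (i1#i2#i3#ks)!(3*j+2) = B"
      proof (cases j)
        case 0 then show ?thesis using s by simp
      next
        case (Suc j')
        have e1: "3*j = Suc (Suc (Suc (3*j')))" "3*j+1 = Suc (Suc (Suc (3*j'+1)))"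
          "3*j+2 = Suc (Suc (Suc (3*j'+2)))" using Suc by auto
        show ?thesis unfolding e1 using c \<open>j < Suc n\<close> Suc by simp
      qed
    qed
    then show ?thesis using l we by (intro exI[of _ "i1#i2#i3#ks"]) simp
  next
    assume "\<exists>Q2. cnt Q2 = cnt ?R + 2 \<and> W \<in> reach Q2 ?u"
    then obtain Q2 where q: "cnt Q2 = cnt ?R + 2" and w: "W \<in> reach Q2 ?u" by blast
    from reach_count[OF w] have "cnt Q2 \<le> cnt W + cnt ?u" .
    moreover have "cnt W = 0" using Suc.prems(2) by (auto simp: cnt_def filter_empty_conv)
    moreover have "cnt ?u = n" by (simp add: cnt_concat_rep)
    moreover have "cnt ?R \<ge> n" by (simp add: cnt_concat_rep)
    ultimately show ?thesis using q by simp
  qed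
qed

lemma blk1: "qsteps (replicate (p + k) b @ T, blk (p + c) @ v) (replicate k b @ T @ blk c, v)"
proof -
  let ?L = "replicate (p + k) b @ T"
  have 1: "qsteps (?L, blk (p+c) @ v) (?L @ [a\<^sub>1], replicate p b @ replicate c b @ [a\<^sub>2] @ v)"
    using push_all[of ?L "[a\<^sub>1]" "replicate p b @ replicate c b @ [a\<^sub>2] @ v"]
    by (simp add: blk_def replicate_add)
  have 2: "qsteps (?L @ [a\<^sub>1], replicate p b @ replicate c b @ [a\<^sub>2] @ v)
     (replicate k b @ T @ [a\<^sub>1], replicate c b @ [a\<^sub>2] @ v)"
    using pop_all[of "replicate p b" "replicate k b @ T @ [a\<^sub>1]" "replicate c b @ [a\<^sub>2] @ v"]
    by (simp add: replicate_add)
  have 3: "qsteps (replicate k b @ T @ [a\<^sub>1], replicate c b @ [a\<^sub>2] @ v) (replicate k b @ T @ blk c, v)"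
    using push_all[of "replicate k b @ T @ [a\<^sub>1]" "replicate c b @ [a\<^sub>2]" v] by (simp add: blk_def)
  show ?thesis using rtranclp_trans[OF 1 rtranclp_trans[OF 2 3]] .
qed

lemma seg1: "i1 + i2 + i3 = B \<Longrightarrow>
  qsteps (replicate (2*B) b @ e # R, blk B @ blk B @ blk B @ e # w) (R @ blk i1 @ blk i2 @ blk i3, w)"
proof -
  assume s: "i1 + i2 + i3 = B"
  have s1: "(B-i1) + (B+i1) = 2*B" "(B-i1)+i1 = B" using s by auto
  have s2: "(B-i2) + (i1+i2) = B+i1" "(B-i2)+i2 = B" using s by auto
  have s3: "(B-i3) + 0 = i1+i2" "(B-i3)+i3 = B" using s by auto
  have A: "qsteps (replicate (2*B) b @ e # R, blk B @ blk B @ blk B @ e # w)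
     (replicate (B+i1) b @ e # R @ blk i1, blk B @ blk B @ e # w)"
    using blk1[of "B-i1" "B+i1" "e # R" i1 "blk B @ blk B @ e # w", unfolded s1] by simp
  have B: "qsteps (replicate (B+i1) b @ e # R @ blk i1, blk B @ blk B @ e # w)
     (replicate (i1+i2) b @ e # R @ blk i1 @ blk i2, blk B @ e # w)"
    using blk1[of "B-i2" "i1+i2" "e # R @ blk i1" i2 "blk B @ e # w", unfolded s2] by simp
  have C: "qsteps (replicate (i1+i2) b @ e # R @ blk i1 @ blk i2, blk B @ e # w)
     (e # R @ blk i1 @ blk i2 @ blk i3, e # w)"
    using blk1[of "B-i3" 0 "e # R @ blk i1 @ blk i2" i3 "e # w", unfolded s3] by simp
  have D: "qstep (e # R @ blk i1 @ blk i2 @ blk i3, e # w) (R @ blk i1 @ blk i2 @ blk i3, w)"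
    by (rule qstep.pop)
  show ?thesis using rtranclp.rtrancl_into_rtrancl[OF rtranclp_trans[OF A rtranclp_trans[OF B C]] D] .
qed

lemma main1: "length ks = 3*n \<Longrightarrow> (\<forall>j<n. ks!(3*j) + ks!(3*j+1) + ks!(3*j+2) = B) \<Longrightarrow>
  qsteps (concat (replicate n (replicate (2*B) b @ [e])) @ P,
          concat (replicate n (blk B @ blk B @ blk B @ [e])) @ v) (P @ concat (map blk ks), v)"
proof (induction n arbitrary: "ks" P)
  case 0 then show ?case by simp
next
  case (Suc n)
  from Suc.prems(1) have "length ks = Suc (Suc (Suc (3*n)))" by simp
  then obtain i1 r1 where r1: "ks = i1 # r1" "length r1 = Suc (Suc (3*n))" by (auto simp: length_Suc_conv)
  then obtain i2 r2 where r2: "r1 = i2 # r2" "length r2 = Suc (3*n)" by (auto simp: length_Suc_conv)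
  then obtain i3 ks' where r3: "r2 = i3 # ks'" and l: "length ks' = 3*n" by (auto simp: length_Suc_conv)
  have ie: "ks = i1#i2#i3#ks'" using r1 r2 r3 by simp
  have c: "\<forall>j<n. ks'!(3*j) + ks'!(3*j+1) + ks'!(3*j+2) = B"
  proof (intro allI impI)
    fix j assume "j < n"
    with Suc.prems(2) have "ks!(3*Suc j) + ks!(3*Suc j+1) + ks!(3*Suc j+2) = B" by blast
    moreover have e1: "3*Suc j = Suc (Suc (Suc (3*j)))" "3*Suc j+1 = Suc (Suc (Suc (3*j+1)))"
          "3*Suc j+2 = Suc (Suc (Suc (3*j+2)))" by auto
    ultimately show "ks'!(3*j) + ks'!(3*j+1) + ks'!(3*j+2) = B" unfolding e1 ie by simp
  qed
  from Suc.prems(2) have "ks!(3*0) + ks!(3*0+1) + ks!(3*0+2) = B" by blast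
  then have s: "i1 + i2 + i3 = B" unfolding ie by simp
  let ?R = "concat (replicate n (replicate (2*B) b @ [e])) @ P"
  let ?w = "concat (replicate n (blk B @ blk B @ blk B @ [e])) @ v"
  have X: "qsteps (concat (replicate (Suc n) (replicate (2*B) b @ [e])) @ P,
          concat (replicate (Suc n) (blk B @ blk B @ blk B @ [e])) @ v)
     (concat (replicate n (replicate (2*B) b @ [e])) @ (P @ blk i1 @ blk i2 @ blk i3), ?w)"
    using seg1[OF s, of ?R ?w] by simp
  have Y: "qsteps (concat (replicate n (replicate (2*B) b @ [e])) @ (P @ blk i1 @ blk i2 @ blk i3), ?w)
     ((P @ blk i1 @ blk i2 @ blk i3) @ concat (map blk ks'), v)"
    by (rule Suc.IH[OF l c])
  show ?case unfolding ie using rtranclp_trans[OF X Y] by simp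
qed


lemma Load_eq: "Load m B = e\<^sub>0 # concat (replicate m (replicate (2*B) b @ [e]))"
  by (simp add: Load_def prodw_def map_replicate_const)

lemma Dist_eq: "Dist m B = e\<^sub>0 # concat (replicate m (blk B @ blk B @ blk B @ [e]))"
  by (simp add: Dist_def prodw_def map_replicate_const pw_def numeral_3_eq_3 blk_def)

lemma pw_set: "set (pw u i) \<subseteq> set u" by (auto simp: pw_def)

lemma Ver_nin: assumes s: "s \<notin> {a\<^sub>1, a\<^sub>2, b, c\<^sub>1, c\<^sub>2, x, y}"
  shows "s \<notin> set (Ver ns m B)"
proof -
  have v: "s \<notin> set (vw l)" for l using s by (simp add: vw_def)
  have u: "s \<notin> set (U l)" for l using s by (simp add: U_def)
  have p: "s \<notin> set (pw (U l) n)" for l n using u pw_set by blast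
  have d: "s \<notin> set (Dw ns m k)" for k using p by (simp add: Dw_def)
  have ee: "s \<notin> set (Ew ns m B k)" for k using p s by (simp add: Ew_def)
  have f: "s \<notin> set (Fw m B k)" for k using p by (simp add: Fw_def)
  show ?thesis unfolding Ver_def prodw_def using v d ee f by (simp only: set_concat set_map image_iff) auto
qed

lemma Ver_no: "e\<^sub>0 \<notin> set (Ver ns m B)" "e \<notin> set (Ver ns m B)"
  by (rule Ver_nin; simp)+

lemma map_shift: "map (\<lambda>k. f (k - 1)) [1..<Suc n] = map f [0..<n]"
  by (induction n) auto

lemma prodw_ks: "prodw (length ks) (\<lambda>k. [a\<^sub>1] @ replicate (ks ! (k - 1)) b @ [a\<^sub>2]) = concat (map blk ks)"
proof -
  have "map (\<lambda>k. [a\<^sub>1] @ replicate (ks ! (k - 1)) b @ [a\<^sub>2]) [1..<Suc (length ks)]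
      = map (\<lambda>k. blk (ks ! k)) [0..<length ks]"
    using map_shift[of "\<lambda>k. blk (ks ! k)" "length ks"] by (simp add: blk_def)
  also have "\<dots> = map blk ks" by (rule nth_equalityI) auto
  finally show ?thesis by (simp add: prodw_def)
qed

theorem lemma4:
  fixes ns :: "nat list" and m B :: nat
  assumes "three_partition_instance ns m B"
  shows "(\<forall>i :: nat \<Rightarrow> nat.
            (\<forall>j \<in> {1..m}. i (3*j-2) + i (3*j-1) + i (3*j) = B) \<longrightarrow>
            qsteps ([], wS ns m B)
                   (prodw (3*m) (\<lambda>k. [a\<^sub>1] @ replicate (i k) b @ [a\<^sub>2]), Ver ns m B))
       \<and> (\<forall>W. qsteps ([], wS ns m B) (W, Ver ns m B) \<and> qsteps (W, Ver ns m B) ([], []) \<longrightarrow>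
            (\<exists>i :: nat \<Rightarrow> nat.
               (\<forall>j \<in> {1..m}. i (3*j-2) + i (3*j-1) + i (3*j) = B) \<and>
               W = prodw (3*m) (\<lambda>k. [a\<^sub>1] @ replicate (i k) b @ [a\<^sub>2])))"
proof (intro conjI allI impI)
  let ?L = "concat (replicate m (replicate (2*B) b @ [e]))"
  let ?D = "concat (replicate m (blk B @ blk B @ blk B @ [e]))"
  let ?V = "Ver ns m B"
  have wS: "wS ns m B = (e\<^sub>0 # ?L) @ e\<^sub>0 # ?D @ ?V"
    by (simp add: wS_def Load_eq Dist_eq)
  {
    fix i :: "nat \<Rightarrow> nat"
    assume h: "\<forall>j \<in> {1..m}. i (3*j-2) + i (3*j-1) + i (3*j) = B"
    define ks where "ks = map i [1..<Suc (3*m)]"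
    have l: "length ks = 3*m" by (simp add: ks_def)
    have c: "\<forall>j<m. ks!(3*j) + ks!(3*j+1) + ks!(3*j+2) = B"
    proof (intro allI impI)
      fix j assume j: "j < m"
      have "Suc j \<in> {1..m}" using j by simp
      from h[rule_format, OF this] have hh: "i (3*Suc j-2) + i (3*Suc j-1) + i (3*Suc j) = B" .
      have q: "3*Suc j-2 = 3*j+1" "3*Suc j-1 = 3*j+2" by auto
      have hh2: "i (3*j+1) + i (3*j+2) + i (3*Suc j) = B" using hh unfolding q .
      moreover have "ks!(3*j) = i (3*j+1)" "ks!(3*j+1) = i (3*j+2)"
        using j by (simp_all add: ks_def nth_upt del: upt_Suc)
      moreover have q3: "3*Suc j = Suc (Suc (Suc (3*j)))" by simp
      have "ks!(3*j+2) = i (3*Suc j)"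
        by (subst q3) (use j in \<open>simp add: ks_def nth_upt del: upt_Suc\<close>)
      moreover note this
      ultimately show "ks!(3*j) + ks!(3*j+1) + ks!(3*j+2) = B" by (simp only:)
    qed
    have pe: "prodw (3*m) (\<lambda>k. [a\<^sub>1] @ replicate (i k) b @ [a\<^sub>2]) = concat (map blk ks)"
      by (simp add: prodw_def ks_def blk_def comp_def del: upt_Suc)
    have 1: "qsteps ([], (e\<^sub>0 # ?L) @ e\<^sub>0 # ?D @ ?V) (e\<^sub>0 # ?L, e\<^sub>0 # ?D @ ?V)"
      using push_all[of "[]" "e\<^sub>0 # ?L" "e\<^sub>0 # ?D @ ?V"] by simp
    have 2: "qstep (e\<^sub>0 # ?L, e\<^sub>0 # ?D @ ?V) (?L, ?D @ ?V)" by (rule qstep.pop)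
    have 3: "qsteps (?L, ?D @ ?V) (concat (map blk ks), ?V)"
      using main1[OF l c, of "[]" ?V] by simp
    show "qsteps ([], wS ns m B) (prodw (3*m) (\<lambda>k. [a\<^sub>1] @ replicate (i k) b @ [a\<^sub>2]), ?V)"
      unfolding wS pe using rtranclp_trans[OF rtranclp.rtrancl_into_rtrancl[OF 1 2] 3] .
  }
  {
    fix W
    assume h: "qsteps ([], wS ns m B) (W, ?V) \<and> qsteps (W, ?V) ([], [])"
    from h have "set W \<subseteq> set ?V" using qsteps_set[of "(W, ?V)" "([], [])"] by auto
    then have ne0: "e\<^sub>0 \<notin> set W" and ne: "e \<notin> set W" using Ver_no by auto
    from h have "qsteps ([], ((e\<^sub>0 # ?L) @ e\<^sub>0 # ?D) @ ?V) (W, ?V)" unfolding wS by simp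
    then have "W \<in> reach [] ((e\<^sub>0 # ?L) @ e\<^sub>0 # ?D)" by (rule qsteps_reach)
    moreover have "e\<^sub>0 \<notin> set ?L" by auto
    moreover have "e\<^sub>0 \<notin> set ?D" by (auto simp: blk_def)
    ultimately have "W \<in> reach (e\<^sub>0 # ?L) (e\<^sub>0 # ?D)"
      by (simp add: reach_append reach_nopop)
    then have "W \<in> reach (e\<^sub>0 # ?L @ [e\<^sub>0]) ?D \<or> W \<in> reach ?L ?D" by simp
    moreover have "W \<notin> reach (e\<^sub>0 # ?L @ [e\<^sub>0]) ?D"
      using ne0 \<open>e\<^sub>0 \<notin> set ?D\<close> by (subst reach_nopop) auto
    ultimately have "W \<in> reach (?L @ []) ?D" by simp
    from main2[OF this ne] obtain ks where l: "length ks = 3*m" and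
      c: "\<forall>j<m. ks!(3*j) + ks!(3*j+1) + ks!(3*j+2) = B" and we: "W = [] @ concat (map blk ks)"
      by blast
    show "\<exists>i :: nat \<Rightarrow> nat.
               (\<forall>j \<in> {1..m}. i (3*j-2) + i (3*j-1) + i (3*j) = B) \<and>
               W = prodw (3*m) (\<lambda>k. [a\<^sub>1] @ replicate (i k) b @ [a\<^sub>2])"
    proof (intro exI conjI ballI)
      fix j assume "j \<in> {1..m}"
      then obtain j' where j: "j = Suc j'" "j' < m" by (cases j) auto
      have "3*j-2-1 = 3*j'" "3*j-1-1 = 3*j'+1" "3*j-1 = 3*j'+2" using j by auto
      with c j show "ks ! (3*j-2-1) + ks ! (3*j-1-1) + ks ! (3*j-1) = B" by simp
    next
      show "W = prodw (3*m) (\<lambda>k. [a\<^sub>1] @ replicate (ks ! (k - 1)) b @ [a\<^sub>2])"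
        using prodw_ks[of ks] l we by simp
    qed
  }
qed

end
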